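(* Let $t>0$ and $\kappa=0$. Then $P_n^{(m)}(0)=\delta_{m0}$, so $b_n(0,t)=2\sum_{k=1}^n\binom{2n}{n-k}e^{-kt}L_{k-1}^{(1)}(2kt)$ for $n\ge1$, and near the origin $$\Phi_{0,t}^{-1}(z)=1+2\sum_{n\ge1}\frac{1}{n}e^{-nt}L_{n-1}^{(1)}(2nt)\,z^n .$$
   Context: Pochhammer symbol: $(a)_0=1$, $(a)_k=a(a+1)\cdots(a+k-1)$. Laguerre polynomials: $L_n^{(a)}(x):=\frac{1}{n!}\sum_{j=0}^n\frac{(-n)_j}{j!}(a+j+1)_{n-j}x^j$. $P_n^{(m)}(\epsilon):=\frac{(-1)^m}{m!}\sum_{k=0}^n\binom{n}{k}(-\epsilon)^k(2k)_m$. Let $\alpha(z):=\frac{1-\sqrt{1-z}}{1+\sqrt{1-z}}$ (principal branch), with inverse $\alpha^{-1}(z)=\frac{4z}{(1+z)^2}$; $\xi_{2t}(z):=\frac{z-1}{z+1}e^{tz}$; $\phi_{\kappa,t}(z):=\frac{z^2}{z^2-\kappa^2}\alpha^{-1}(\xi_{2t}(z))$; $a_n(\kappa,t):=\frac{1}{n!}\partial_z^{n-1}[(z-1)/\phi_{\kappa,t}(z)]^n|_{z=1}$; $b_n(\kappa,t):=n2^{2n}a_n(\kappa,t)$; $\Phi_{\kappa,t}:=\alpha\circ\phi_{\kappa,t}$, which is invertible near $z=1$ with $\Phi_{\kappa,t}(1)=0$, and $\Phi^{-1}_{\kappa,t}$ denotes its local inverse near $0$. *)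

theory Defs
  imports "HOL-Analysis.Analysis"
begin

definition laguerre :: "nat \<Rightarrow> real \<Rightarrow> real \<Rightarrow> real" where
  "laguerre n a x = (1 / fact n) *
     (\<Sum>j=0..n. pochhammer (- real n) j / fact j * pochhammer (a + real j + 1) (n - j) * x ^ j)"

definition Ppoly :: "nat \<Rightarrow> nat \<Rightarrow> complex \<Rightarrow> complex" where
  "Ppoly n m \<epsilon> = ((-1) ^ m / fact m) *
     (\<Sum>k=0..n. of_nat (n choose k) * (- \<epsilon>) ^ k * pochhammer (of_nat (2 * k)) m)"

definition alpha :: "complex \<Rightarrow> complex" where
  "alpha z = (1 - csqrt (1 - z)) / (1 + csqrt (1 - z))"

definition alpha_inv :: "complex \<Rightarrow> complex" where
  "alpha_inv z = 4 * z / (1 + z) ^ 2"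

text \<open>xi_{2t}(z) = (z-1)/(z+1) e^{tz}; the argument t is the t of the subscript 2t.\<close>
definition xi2t :: "real \<Rightarrow> complex \<Rightarrow> complex" where
  "xi2t t z = (z - 1) / (z + 1) * exp (of_real t * z)"

definition phi :: "complex \<Rightarrow> real \<Rightarrow> complex \<Rightarrow> complex" where
  "phi \<kappa> t z = z ^ 2 / (z ^ 2 - \<kappa> ^ 2) * alpha_inv (xi2t t z)"

definition lagr_fun :: "complex \<Rightarrow> real \<Rightarrow> complex \<Rightarrow> complex" where
  "lagr_fun \<kappa> t z = (if z = 1 then Lim (at 1) (\<lambda>w. (w - 1) / phi \<kappa> t w)
                      else (z - 1) / phi \<kappa> t z)"

definition a_coef :: "nat \<Rightarrow> complex \<Rightarrow> real \<Rightarrow> complex" where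
  "a_coef n \<kappa> t = (deriv ^^ (n - 1)) (\<lambda>z. (lagr_fun \<kappa> t z) ^ n) 1 / fact n"

definition b_coef :: "nat \<Rightarrow> complex \<Rightarrow> real \<Rightarrow> complex" where
  "b_coef n \<kappa> t = of_nat n * 2 ^ (2 * n) * a_coef n \<kappa> t"

definition Phi :: "complex \<Rightarrow> real \<Rightarrow> complex \<Rightarrow> complex" where
  "Phi \<kappa> t = alpha \<circ> phi \<kappa> t"

end

theory Submission
  imports Defs "HOL-Complex_Analysis.Complex_Analysis"
begin

unbundle no vec_syntax


lemma res_pow_deriv_zero:
  fixes F :: "'a::field_char_0 fls"
  assumes "m \<ge> 2"
  shows "fls_residue (inverse F ^ m * fls_deriv F) = 0"
proof -
  obtain k where k: "m = Suc (Suc k)" using assms by (metis add_2_eq_Suc le_Suc_ex)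
  have "fls_deriv (inverse F ^ Suc k) = of_nat (Suc k) * inverse F ^ k * fls_deriv (inverse F)"
    by (simp only: fls_deriv_power diff_Suc_1)
  also have "\<dots> = - (of_nat (Suc k) * (inverse F ^ m * fls_deriv F))"
    by (simp only: fls_inverse_deriv k power2_eq_square power_Suc mult_minus_right mult_minus_left mult_ac)
  finally have eq: "fls_deriv (inverse F ^ Suc k) = - (of_nat (Suc k) * (inverse F ^ m * fls_deriv F))" .
  have "fls_residue (- (of_nat (Suc k) * (inverse F ^ m * fls_deriv F))) = 0"
    using fls_residue_deriv[of "inverse F ^ Suc k"] unfolding eq .
  hence "of_nat (Suc k) * fls_residue (inverse F ^ m * fls_deriv F) = 0"
    by (simp only: fls_of_nat fls_residue_def fls_uminus_nth neg_equal_0_iff_equal fls_mult_const_nth)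
  thus ?thesis by (simp del: of_nat_Suc fls_residue_def)
qed

lemma lagrange_inversion:
  fixes \<phi> :: "'a::field_char_0 fps"
  assumes phi0: "\<phi> $ 0 \<noteq> 0" and n: "n > 0"
  shows "of_nat n * fps_inv (fps_X * inverse \<phi>) $ n = (\<phi> ^ n) $ (n - 1)"
proof -
  define f where "f = fps_X * inverse \<phi>"
  define g where "g = fps_inv f"
  have f0: "f $ 0 = 0" by (simp add: f_def)
  have f1: "f $ 1 \<noteq> 0" using phi0 by (simp add: f_def)
  have fnz: "f \<noteq> 0" using f1 by auto
  have subf: "subdegree f = 1" using f0 f1 by (intro subdegreeI) auto
  have gf: "g oo f = fps_X" unfolding g_def by (rule fps_inv[OF f0 f1])
  define Q where "Q = fps_deriv g oo f"
  have Qf: "Q * fps_deriv f = 1"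
  proof -
    have "fps_deriv (g oo f) = Q * fps_deriv f"
      unfolding Q_def by (rule fps_compose_deriv[OF f0])
    thus ?thesis using gf by simp
  qed
  define P where "P = (\<Sum>k=0..n. fps_const (fps_deriv g $ k) * f ^ k)"
  define R where "R = Q - P"
  have R_low: "R $ m = 0" if "m \<le> n" for m
  proof -
    have "Q $ m = (\<Sum>k=0..m. fps_deriv g $ k * (f ^ k) $ m)"
      unfolding Q_def by (rule fps_compose_nth)
    also have "\<dots> = (\<Sum>k=0..n. fps_deriv g $ k * (f ^ k) $ m)"
    proof (rule sum.mono_neutral_left)
      show "\<forall>i\<in>{0..n} - {0..m}. fps_deriv g $ i * f ^ i $ m = 0"
        using startsby_zero_power_prefix[OF f0] by auto
    qed (use that in auto)
    also have "\<dots> = P $ m" by (simp add: P_def fps_sum_nth)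
    finally show ?thesis by (simp add: R_def)
  qed
  define F where "F = fps_to_fls f"
  define I where "I = inverse F"
  have Fnz: "F \<noteq> 0" using fnz by (simp add: F_def)
  have subF: "fls_subdegree F = 1" using subf by (simp add: F_def fls_subdegree_fls_to_fps)
  have subI: "fls_subdegree I = -1" by (simp add: I_def subF)
  have IF: "I * F = 1" using Fnz by (simp add: I_def)
  have dF: "fls_deriv F = fps_to_fls (fps_deriv f)" by (simp add: F_def fls_deriv_fps_to_fls)
  have "I ^ n = I ^ n * fps_to_fls (Q * fps_deriv f)" using Qf by simp
  also have "\<dots> = I ^ n * fps_to_fls P * fls_deriv F + I ^ n * fps_to_fls (R * fps_deriv f)"
    by (simp add: R_def dF fls_times_fps_to_fls algebra_simps)
  finally have split: "I ^ n = I ^ n * fps_to_fls P * fls_deriv F + I ^ n * fps_to_fls (R * fps_deriv f)" .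
  have res2: "fls_residue (I ^ n * fps_to_fls (R * fps_deriv f)) = 0"
  proof (cases "R * fps_deriv f = 0")
    case True thus ?thesis by (simp only: True fps_zero_to_fls mult_zero_right) simp
  next
    case False
    have "subdegree (R * fps_deriv f) \<ge> Suc n"
    proof (rule subdegree_geI[OF False])
      fix i assume "i < Suc n"
      thus "(R * fps_deriv f) $ i = 0"
        by (auto simp: fps_mult_nth R_low intro!: sum.neutral)
    qed
    moreover have "I \<noteq> 0" using Fnz by (simp add: I_def)
    ultimately have "fls_subdegree (I ^ n * fps_to_fls (R * fps_deriv f)) \<ge> 0"
      using False by (simp add: fls_subdegree_pow subI fls_subdegree_fls_to_fps)
    thus ?thesis by (rule fls_residue_power_series)
  qed
  have trm: "fls_residue (I ^ n * F ^ k * fls_deriv F) = (if k = n - 1 then 1 else 0)"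
    if kn: "k \<le> n" for k
  proof -
    have pw: "I ^ n * F ^ k = I ^ (n - k)"
    proof -
      have "I ^ n = I ^ (n - k) * I ^ k" using kn by (simp add: power_add[symmetric])
      hence "I ^ n * F ^ k = I ^ (n - k) * (I * F) ^ k" by (simp add: power_mult_distrib mult.assoc)
      thus ?thesis using IF by simp
    qed
    consider "k = n" | "k = n - 1" | "k < n - 1" using kn by linarith
    thus ?thesis
    proof cases
      case 1
      have "fls_residue (fls_deriv F) = 0" by (rule fls_residue_deriv)
      thus ?thesis using 1 n pw by simp
    next
      case 2
      have "n - k = 1" using 2 n by simp
      hence "fls_residue (I ^ n * F ^ k * fls_deriv F) = fls_residue (fls_deriv F * inverse F)"
        using pw by (simp add: I_def mult.commute)
      also have "\<dots> = 1" using subF by (simp only: fls_residue_deriv_times_inverse_eq_subdegree) simp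
      finally show ?thesis using 2 by simp
    next
      case 3
      have "fls_residue (I ^ (n - k) * fls_deriv F) = 0"
        unfolding I_def by (rule res_pow_deriv_zero) (use 3 in linarith)
      thus ?thesis using 3 pw by simp
    qed
  qed
  have toP: "fps_to_fls P = (\<Sum>k=0..n. fls_const (fps_deriv g $ k) * F ^ k)"
    unfolding P_def F_def
    by (induction n) (simp_all add: fls_times_fps_to_fls fps_to_fls_power)
  have "fls_residue (I ^ n * fps_to_fls P * fls_deriv F)
        = (\<Sum>k=0..n. fps_deriv g $ k * fls_residue (I ^ n * F ^ k * fls_deriv F))"
  proof -
    have h: "A * (fls_const c * B) * C = fls_const c * (A * B * C)" for A B C :: "'a fls" and c
      by (simp add: ac_simps)
    show ?thesis
      unfolding toP sum_distrib_left sum_distrib_right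
      by (simp only: fls_residue_def fls_nth_sum h fls_mult_const_nth)
  qed
  also have "\<dots> = (\<Sum>k=0..n. fps_deriv g $ k * (if k = n - 1 then 1 else 0))"
    by (intro sum.cong refl, subst trm) auto
  also have "\<dots> = (\<Sum>k=0..n. if k = n - 1 then fps_deriv g $ k else 0)"
    by (intro sum.cong refl) simp
  also have "\<dots> = fps_deriv g $ (n - 1)" using sum.delta[of "{0..n}" "n - 1" "\<lambda>k. fps_deriv g $ k"] by simp
  also have "\<dots> = of_nat n * g $ n" using n by simp
  finally have res1: "fls_residue (I ^ n * fps_to_fls P * fls_deriv F) = of_nat n * g $ n" .
  have lhs: "fls_residue (I ^ n) = of_nat n * g $ n"
    using res1 res2 split by (metis add.right_neutral fls_residue_add)
  have Iphi: "I = fls_X_inv * fps_to_fls \<phi>"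
  proof -
    have "fps_to_fls (inverse \<phi>) * fps_to_fls \<phi> = 1"
      using phi0 by (simp add: fls_times_fps_to_fls[symmetric] inverse_mult_eq_1)
    hence "inverse (fps_to_fls (inverse \<phi>)) = fps_to_fls \<phi>"
      by (metis inverse_unique mult.commute)
    thus ?thesis unfolding I_def F_def f_def
      by (simp add: fls_times_fps_to_fls fls_inverse_X)
  qed
  have "fls_residue (I ^ n) = (\<phi> ^ n) $ (n - 1)"
  proof -
    have "I ^ n = fls_shift (int n) (fps_to_fls (\<phi> ^ n))"
      unfolding Iphi power_mult_distrib fps_to_fls_power
      by (rule fls_X_inv_power_times_conv_shift(1))
    moreover have "nat (int n - 1) = n - 1" using n by linarith
    ultimately show ?thesis using n by simp
  qed
  with lhs show ?thesis by (simp add: g_def f_def)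
qed





lemma poch_nat: "pochhammer (real m + 1) k = fact (m + k) / fact m"
proof (induction k)
  case (Suc k)
  have "pochhammer (real m + 1) (Suc k) = fact (m + k) / fact m * (real (m + k) + 1)"
    by (simp only: pochhammer_Suc Suc.IH) simp
  also have "\<dots> = fact (m + Suc k) / fact m" by (simp add: field_simps)
  finally show ?case .
qed simp

lemma poch_neg: "j \<le> N \<Longrightarrow> pochhammer (- real N) j = (-1) ^ j * fact N / fact (N - j)"
proof -
  assume j: "j \<le> N"
  have "real N - real j + 1 = real (N - j) + 1" using j by simp
  hence "pochhammer (real N - real j + 1) j = fact N / fact (N - j)"
    using poch_nat[of "N - j" j] j by simp
  thus ?thesis by (simp add: pochhammer_minus)
qed

lemma laguerre_alt:
  "laguerre N 1 x = (\<Sum>j=0..N. (-1) ^ j * real (Suc N choose Suc j) * x ^ j / fact j)"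
  unfolding laguerre_def sum_distrib_left
proof (intro sum.cong refl)
  fix j assume "j \<in> {0..N}"
  hence j: "j \<le> N" by simp
  have p2: "pochhammer (1 + real j + 1) (N - j) = fact (Suc N) / fact (Suc j)"
    using poch_nat[of "Suc j" "N - j"] j by (simp add: add.commute)
  have b: "real (Suc N choose Suc j) = fact (Suc N) / (fact (Suc j) * fact (N - j))"
    using binomial_fact[of "Suc j" "Suc N"] j by simp
  show "1 / fact N * (pochhammer (- real N) j / fact j * pochhammer (1 + real j + 1) (N - j) * x ^ j)
        = (-1) ^ j * real (Suc N choose Suc j) * x ^ j / fact j"
    unfolding p2 b poch_neg[OF j] by (simp add: field_simps del: fact_Suc of_nat_Suc)
qed

lemma fps_X2_power_nth:
  "((fps_X + 2 :: complex fps) ^ m) $ i = of_nat (m choose i) * 2 ^ (m - i)"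
proof (induction m arbitrary: i)
  case 0 thus ?case by simp
next
  case (Suc m)
  have "((fps_X + 2 :: complex fps) ^ Suc m) $ i = (fps_X * (fps_X + 2) ^ m) $ i + 2 * ((fps_X + 2) ^ m) $ i"
    by (simp add: algebra_simps)
  also have "\<dots> = (if i = 0 then 0 else of_nat (m choose (i - 1)) * 2 ^ (m - (i - 1)))
                  + 2 * (of_nat (m choose i) * 2 ^ (m - i))"
    by (simp add: Suc.IH)
  also have "\<dots> = of_nat (Suc m choose i) * 2 ^ (Suc m - i)"
  proof (cases i)
    case 0 thus ?thesis by simp
  next
    case (Suc k)
    show ?thesis
    proof (cases "k \<le> m")
      case True
      hence "m - k = Suc (m - Suc k) \<or> k = m" by linarith
      thus ?thesis using Suc True by (auto simp: algebra_simps)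
    next
      case False thus ?thesis using Suc by simp
    qed
  qed
  finally show ?case .
qed

lemma coefL:
  "((fps_X + 2 :: complex fps) ^ Suc N * fps_exp (- (of_nat (Suc N) * complex_of_real t))) $ N
     = 2 * complex_of_real (laguerre N 1 (2 * real (Suc N) * t))"
proof -
  define c where "c = - (of_nat (Suc N) * complex_of_real t)"
  have "((fps_X + 2 :: complex fps) ^ Suc N * fps_exp c) $ N
      = (\<Sum>i=0..N. of_nat (Suc N choose i) * 2 ^ (Suc N - i) * (c ^ (N - i) / fact (N - i)))"
    by (simp only: fps_mult_nth fps_X2_power_nth fps_exp_nth of_nat_fact)
  also have "\<dots> = (\<Sum>j=0..N. of_nat (Suc N choose (N - j)) * 2 ^ (Suc N - (N - j)) * (c ^ (N - (N - j)) / fact (N - (N - j))))"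
    by (subst sum.atLeastAtMost_rev) simp
  also have "\<dots> = (\<Sum>j=0..N. 2 * complex_of_real ((-1) ^ j * real (Suc N choose Suc j) * (2 * real (Suc N) * t) ^ j / fact j))"
  proof (intro sum.cong refl)
    fix j assume "j \<in> {0..N}"
    hence j: "j \<le> N" by simp
    have ch: "Suc N choose (N - j) = Suc N choose Suc j"
      using binomial_symmetric[of "Suc j" "Suc N"] j by simp
    have e1: "Suc N - (N - j) = Suc j" "N - (N - j) = j" using j by auto
    show "of_nat (Suc N choose (N - j)) * 2 ^ (Suc N - (N - j)) * (c ^ (N - (N - j)) / fact (N - (N - j)))
        = 2 * complex_of_real ((-1) ^ j * real (Suc N choose Suc j) * (2 * real (Suc N) * t) ^ j / fact j)"
    proof -
      have r: "complex_of_real ((-1)^j * real (Suc N choose Suc j) * (2*real (Suc N)*t)^j / fact j)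
          = (-1)^j * of_nat (Suc N choose Suc j) * (2 * (of_nat (Suc N) * of_real t))^j / fact j"
        by (simp only: of_real_mult of_real_divide of_real_power of_real_fact of_real_of_nat_eq
              of_real_minus of_real_1 of_real_numeral mult.assoc)
      have m: "c ^ j = (-1) ^ j * (of_nat (Suc N) * of_real t) ^ j"
        unfolding c_def by (rule power_minus)
      show ?thesis unfolding ch e1 r m
        by (simp only: power_mult_distrib power_Suc divide_inverse mult_ac)
    qed
  qed
  also have "\<dots> = 2 * complex_of_real (laguerre N 1 (2 * real (Suc N) * t))"
    by (simp add: laguerre_alt sum_distrib_left)
  finally show ?thesis unfolding c_def .
qed

lemma coefL':
  assumes "k > 0"
  shows "((fps_X + 2 :: complex fps) ^ k * fps_exp (- (of_nat k * complex_of_real t))) $ (k - 1)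
     = 2 * complex_of_real (laguerre (k - 1) 1 (2 * real k * t))"
proof -
  obtain N where k: "k = Suc N" using assms by (cases k) auto
  show ?thesis unfolding k using coefL[of N t] by (simp only: diff_Suc_1 of_nat_Suc)
qed

lemma part2_formal:
  fixes t :: real
  assumes n: "n > 0"
  defines "A \<equiv> (fps_X + 2 :: complex fps)"
  defines "H \<equiv> fps_const (exp (- complex_of_real t)) * fps_exp (- complex_of_real t)
      * (A + fps_X * fps_const (exp (complex_of_real t)) * fps_exp (complex_of_real t)) ^ 2
      * inverse (fps_const 4 * A)"
  shows "4 ^ n * (H ^ n) $ (n - 1) = 2 * (\<Sum>k=1..n. of_nat ((2 * n) choose (n - k)) *
                 complex_of_real (exp (- (real k * t)) * laguerre (k - 1) 1 (2 * real k * t)))"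
proof -
  define ct where "ct = complex_of_real t"
  define B where "B = fps_X * fps_const (exp ct) * fps_exp ct"
  have A0: "A $ 0 \<noteq> 0" by (simp add: A_def)
  have AI: "A * inverse A = 1" using A0 by (simp add: inverse_mult_eq_1')
  define T where "T j = fps_const (exp (- ct) ^ n / 4 ^ n * of_nat ((2 * n) choose j) * exp ct ^ j)
        * ((A ^ (2 * n - j) * inverse A ^ n) * (fps_exp (- ct) ^ n * fps_exp ct ^ j))" for j
  have Hn: "H ^ n = (\<Sum>j\<le>2 * n. fps_X ^ j * T j)"
  proof -
    have inv4: "inverse (fps_const 4 * A) = fps_const (1/4) * inverse A"
      by (simp add: fps_inverse_mult fps_const_inverse)
    have H': "H = fps_const (exp (- ct) / 4) * fps_exp (- ct) * (B + A) ^ 2 * inverse A"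
    proof -
      have c4: "fps_const (exp (- complex_of_real t) / 4) = fps_const (exp (- complex_of_real t)) * fps_const (1/4)" by simp
      show ?thesis unfolding H_def inv4 B_def ct_def c4 by (simp only: mult_ac add_ac)
    qed
    have "H ^ n = fps_const (exp (- ct) ^ n / 4 ^ n) * fps_exp (- ct) ^ n * (B + A) ^ (2 * n) * inverse A ^ n"
      unfolding H' power_mult_distrib fps_const_power power_mult power_divide ..
    also have "(B + A) ^ (2 * n) = (\<Sum>j\<le>2 * n. of_nat ((2 * n) choose j) * B ^ j * A ^ (2 * n - j))"
      by (rule binomial_ring)
    also have "fps_const (exp (- ct) ^ n / 4 ^ n) * fps_exp (- ct) ^ n
        * (\<Sum>j\<le>2 * n. of_nat ((2 * n) choose j) * B ^ j * A ^ (2 * n - j)) * inverse A ^ n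
        = (\<Sum>j\<le>2 * n. fps_X ^ j * T j)"
      unfolding sum_distrib_left sum_distrib_right
    proof (intro sum.cong refl)
      fix j
      show "fps_const (exp (- ct) ^ n / 4 ^ n) * fps_exp (- ct) ^ n * (of_nat (2 * n choose j) * B ^ j * A ^ (2 * n - j)) * inverse A ^ n = fps_X ^ j * T j"
        unfolding T_def B_def power_mult_distrib fps_of_nat[where 'a=complex, symmetric] fps_const_power
        by (simp only: fps_const_mult[symmetric], simp only: mult_ac)
    qed
    finally show ?thesis .
  qed
  have coefj: "(fps_X ^ j * T j) $ (n - 1) = (if j < n then
        of_nat ((2 * n) choose j) * complex_of_real (exp (- (real (n - j) * t)) * laguerre (n - j - 1) 1 (2 * real (n - j) * t)) * 2 / 4 ^ n
        else 0)" for j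
  proof (cases "j < n")
    case False thus ?thesis using n by (simp add: fps_X_power_mult_nth)
  next
    case True
    have e1: "fps_exp (- ct) ^ n * fps_exp ct ^ j = fps_exp (- (of_nat (n - j) * ct))"
    proof -
      have "of_nat n * - ct + of_nat j * ct = - (of_nat (n - j) * ct)"
        using True by (simp add: of_nat_diff algebra_simps)
      thus ?thesis unfolding fps_exp_power_mult fps_exp_add_mult[symmetric] by simp
    qed
    have e2: "A ^ (2 * n - j) * inverse A ^ n = A ^ (n - j)"
    proof -
      have "2 * n - j = (n - j) + n" using True by simp
      hence "A ^ (2 * n - j) = A ^ (n - j) * A ^ n" by (simp only: power_add)
      hence "A ^ (2 * n - j) * inverse A ^ n = A ^ (n - j) * (A * inverse A) ^ n"
        by (simp add: power_mult_distrib mult.assoc)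
      thus ?thesis using AI by simp
    qed
    have e3: "exp (- ct) ^ n * exp ct ^ j = complex_of_real (exp (- (real (n - j) * t)))"
    proof -
      have "of_nat n * - ct + of_nat j * ct = - (of_nat (n - j) * ct)"
        using True by (simp add: of_nat_diff algebra_simps)
      hence "exp (- ct) ^ n * exp ct ^ j = exp (- (of_nat (n - j) * ct))"
        unfolding exp_of_nat_mult[symmetric] exp_add[symmetric] by simp
      also have "\<dots> = complex_of_real (exp (- (real (n - j) * t)))"
        unfolding ct_def by (simp add: exp_of_real[symmetric])
      finally show ?thesis .
    qed
    have "(fps_X ^ j * T j) $ (n - 1) = T j $ (n - 1 - j)"
      using True by (simp add: fps_X_power_mult_nth)
    also have "\<dots> = exp (- ct) ^ n / 4 ^ n * of_nat ((2 * n) choose j) * exp ct ^ j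
         * (A ^ (n - j) * fps_exp (- (of_nat (n - j) * ct))) $ (n - j - 1)"
    proof -
      have "n - 1 - j = n - j - 1" by simp
      thus ?thesis unfolding T_def e1 e2 by (simp only: fps_mult_left_const_nth)
    qed
    also have "(A ^ (n - j) * fps_exp (- (of_nat (n - j) * ct))) $ (n - j - 1)
        = 2 * complex_of_real (laguerre (n - j - 1) 1 (2 * real (n - j) * t))"
      unfolding A_def ct_def by (rule coefL') (use True in simp)
    also have "exp (- ct) ^ n / 4 ^ n * of_nat ((2 * n) choose j) * exp ct ^ j
         * (2 * complex_of_real (laguerre (n - j - 1) 1 (2 * real (n - j) * t)))
       = of_nat ((2 * n) choose j) * ((exp (- ct) ^ n * exp ct ^ j) * complex_of_real (laguerre (n - j - 1) 1 (2 * real (n - j) * t))) * 2 / 4 ^ n"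
      by (simp only: divide_inverse mult_ac)
    also have "\<dots> = of_nat ((2 * n) choose j) * (complex_of_real (exp (- (real (n - j) * t))) * complex_of_real (laguerre (n - j - 1) 1 (2 * real (n - j) * t))) * 2 / 4 ^ n"
      unfolding e3 ..
    finally show ?thesis using True by simp
  qed
  have "(H ^ n) $ (n - 1) = (\<Sum>j\<le>2 * n. if j < n then
        of_nat ((2 * n) choose j) * complex_of_real (exp (- (real (n - j) * t)) * laguerre (n - j - 1) 1 (2 * real (n - j) * t)) * 2 / 4 ^ n
        else 0)"
    unfolding Hn fps_sum_nth coefj ..
  also have "\<dots> = (\<Sum>j\<in>{..<n}.
        of_nat ((2 * n) choose j) * complex_of_real (exp (- (real (n - j) * t)) * laguerre (n - j - 1) 1 (2 * real (n - j) * t)) * 2 / 4 ^ n)"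
  proof -
    have "{j \<in> {..2*n}. j < n} = {..<n}" by auto
    thus ?thesis by (simp only: sum.inter_filter[symmetric, OF finite_atMost])
  qed
  also have "\<dots> = (\<Sum>k=1..n. of_nat ((2 * n) choose (n - k)) *
                 complex_of_real (exp (- (real k * t)) * laguerre (k - 1) 1 (2 * real k * t)) * 2 / 4 ^ n)"
    by (rule sum.reindex_bij_witness[of _ "\<lambda>k. n - k" "\<lambda>j. n - j"]) (auto simp: of_nat_diff)
  also have "\<dots> = (\<Sum>k=1..n. of_nat ((2 * n) choose (n - k)) *
                 complex_of_real (exp (- (real k * t)) * laguerre (k - 1) 1 (2 * real k * t))) * 2 / 4 ^ n"
    by (simp only: sum_divide_distrib[symmetric] sum_distrib_right[symmetric])
  finally show ?thesis by simp
qed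





definition hfun :: "real \<Rightarrow> complex \<Rightarrow> complex" where
  "hfun t z = exp (- (of_real t * z)) * ((z + 1) + (z - 1) * exp (of_real t * z)) ^ 2 / (4 * (z + 1))"

lemma quot_eq_hfun:
  assumes "z \<noteq> 0" "z \<noteq> 1" "z \<noteq> -1"
  shows "(z - 1) / phi 0 t z = hfun t z"
proof -
  define e where "e = exp (of_real t * z)"
  define x where "x = (z - 1) / (z + 1) * e"
  have e0: "e \<noteq> 0" by (simp add: e_def)
  have z1: "z + 1 \<noteq> 0" using assms(3) by (metis add_eq_0_iff2 minus_equation_iff)
  have zm1: "z - 1 \<noteq> 0" using assms(2) by simp
  have x0: "x \<noteq> 0" using e0 z1 zm1 by (simp add: x_def)
  have phi: "phi 0 t z = alpha_inv x"
    using assms(1) by (simp add: phi_def xi2t_def x_def e_def)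
  have key: "(z + 1) + (z - 1) * e = (z + 1) * (1 + x)"
    using z1 by (simp add: x_def field_simps)
  have em: "exp (- (of_real t * z)) = inverse e" by (simp add: e_def exp_minus)
  show ?thesis
  proof (cases "1 + x = 0")
    case True
    thus ?thesis unfolding phi hfun_def alpha_inv_def em key[unfolded e_def] by simp
  next
    case False
    have "(z - 1) / alpha_inv x = (z - 1) * (1 + x) ^ 2 / (4 * x)"
      using False x0 by (simp add: alpha_inv_def field_simps)
    also have "\<dots> = inverse e * ((z + 1) * (1 + x)) ^ 2 / (4 * (z + 1))"
    proof -
      have "x * (z + 1) = (z - 1) * e" using z1 by (simp add: x_def)
      hence zx: "z - 1 = x * (z + 1) / e" using e0 by (simp add: field_simps)
      have l: "(z - 1) * (1 + x) ^ 2 / (4 * x) = (z + 1) * (1 + x) ^ 2 / (4 * e)"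
        unfolding zx using x0 e0 by (simp add: field_simps)
      have r: "inverse e * ((z + 1) * (1 + x)) ^ 2 / (4 * (z + 1)) = (z + 1) * (1 + x) ^ 2 / (4 * e)"
      proof -
        have gen: "inverse e' * (a * b) ^ 2 / (4 * a) = a * b ^ 2 / (4 * e')" if "a \<noteq> 0" for a b e' :: complex
          using that by (simp add: divide_simps power2_eq_square)
        show ?thesis using gen[OF z1] .
      qed
      show ?thesis using l r by simp
    qed
    also have "\<dots> = hfun t z"
      unfolding hfun_def em[unfolded e_def] key[unfolded e_def, symmetric] e_def ..
    finally show ?thesis using phi by simp
  qed
qed

lemma ball1_facts:
  fixes z :: complex
  assumes "z \<in> ball 1 (1/2)"
  shows "z \<noteq> 0" "z \<noteq> -1" "z + 1 \<noteq> 0"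
proof -
  have d: "norm (z - 1) < 1/2" using assms by (simp add: dist_norm norm_minus_commute)
  show "z \<noteq> 0" using d by auto
  have m: "z \<noteq> -1" using d by auto
  show "z \<noteq> -1" by (fact m)
  show "z + 1 \<noteq> 0" using m by (metis add_eq_0_iff2)
qed

lemma hfun_holo: "hfun t holomorphic_on ball 1 (1/2)"
proof -
  have nz: "\<And>z. z \<in> ball 1 (1/2) \<Longrightarrow> 4 * (z + 1) \<noteq> (0::complex)"
    using ball1_facts(3) mult_eq_0_iff zero_neq_numeral by metis
  show ?thesis unfolding hfun_def by (intro holomorphic_intros nz)
qed

lemma lagr_eq:
  assumes "z \<in> ball 1 (1/2)"
  shows "lagr_fun 0 t z = hfun t z"
proof (cases "z = 1")
  case False
  thus ?thesis using assms ball1_facts[OF assms] quot_eq_hfun by (simp add: lagr_fun_def)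
next
  case True
  have ev: "eventually (\<lambda>w. hfun t w = (w - 1) / phi 0 t w) (at 1)"
    unfolding eventually_at
  proof (intro exI[of _ "1/2"] conjI ballI impI)
    fix w :: complex assume w: "w \<noteq> 1 \<and> dist w 1 < 1/2"
    hence "w \<in> ball 1 (1/2)" by (simp add: dist_commute)
    thus "hfun t w = (w - 1) / phi 0 t w" using w ball1_facts quot_eq_hfun by metis
  qed simp
  have "isCont (hfun t) 1"
    using holomorphic_on_imp_continuous_on[OF hfun_holo] continuous_on_eq_continuous_at[of "ball 1 (1/2)" "hfun t"]
    by simp
  hence "(hfun t \<longlongrightarrow> hfun t 1) (at 1)" by (simp add: isCont_def)
  hence "((\<lambda>w. (w - 1) / phi 0 t w) \<longlongrightarrow> hfun t 1) (at 1)"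
    using tendsto_cong[OF ev] by simp
  hence "Lim (at 1) (\<lambda>w. (w - 1) / phi 0 t w) = hfun t 1"
    by (intro tendsto_Lim) auto
  thus ?thesis using True by (simp add: lagr_fun_def)
qed

lemma hfun_expansion:
  fixes t :: real
  defines "A \<equiv> (fps_X + 2 :: complex fps)"
  defines "H \<equiv> fps_const (exp (- complex_of_real t)) * fps_exp (- complex_of_real t)
      * (A + fps_X * fps_const (exp (complex_of_real t)) * fps_exp (complex_of_real t)) ^ 2
      * inverse (fps_const 4 * A)"
  shows "(\<lambda>w. hfun t (1 * w + 1)) has_fps_expansion H"
proof -
  define ct where "ct = complex_of_real t"
  have eq: "hfun t (1 * w + 1) = exp (- ct) * exp ((- ct) * w)
       * ((w + 2) + w * exp ct * exp (ct * w)) ^ 2 * inverse (4 * (w + 2))" for w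
  proof -
    have e1: "exp (- (ct * (w + 1))) = exp (- ct) * exp ((- ct) * w)"
      by (simp add: exp_add[symmetric] algebra_simps)
    have e2: "exp (ct * (w + 1)) = exp ct * exp (ct * w)"
      by (simp add: exp_add[symmetric] algebra_simps)
    have a: "w + 1 + 1 = w + 2" "w + 1 - 1 = w" by simp_all
    show ?thesis unfolding hfun_def ct_def[symmetric] mult_1_left e1 e2 a divide_inverse
      by (simp only: mult_ac)
  qed
  have "(\<lambda>w. exp (- ct) * exp ((- ct) * w)
       * ((w + 2) + w * exp ct * exp (ct * w)) ^ 2 * inverse (4 * (w + 2))) has_fps_expansion
       fps_const (exp (- ct)) * fps_exp (- ct) * ((fps_X + 2) + fps_X * fps_const (exp ct) * fps_exp ct) ^ 2
       * inverse (4 * (fps_X + 2))"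
    by (intro fps_expansion_intros) simp
  moreover have "fps_const (exp (- ct)) * fps_exp (- ct) * ((fps_X + 2) + fps_X * fps_const (exp ct) * fps_exp ct) ^ 2
       * inverse (4 * (fps_X + 2)) = H"
  proof -
    have f4: "(4::complex fps) = fps_const 4" by (rule fps_numeral_fps_const)
    show ?thesis unfolding H_def A_def ct_def f4 ..
  qed
  ultimately show ?thesis unfolding eq[abs_def] by simp
qed

lemma part2:
  fixes t :: real
  assumes n1: "n \<ge> 1"
  shows "b_coef n 0 t = 2 * (\<Sum>k=1..n. of_nat ((2 * n) choose (n - k)) *
                 of_real (exp (- (real k * t)) * laguerre (k - 1) 1 (2 * real k * t)))"
proof -
  define H where "H \<equiv> fps_const (exp (- complex_of_real t)) * fps_exp (- complex_of_real t)
      * ((fps_X + 2) + fps_X * fps_const (exp (complex_of_real t)) * fps_exp (complex_of_real t)) ^ 2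
      * inverse (fps_const 4 * (fps_X + 2))"
  have n: "n > 0" using n1 by simp
  define f where "f = (\<lambda>z. hfun t z ^ n)"
  have holo: "f holomorphic_on ball 1 (1/2)" unfolding f_def using hfun_holo by (intro holomorphic_intros)
  have holoL: "(\<lambda>z. lagr_fun 0 t z ^ n) holomorphic_on ball 1 (1/2)"
    by (rule holomorphic_transform[OF holo]) (simp add: lagr_eq f_def)
  have d1: "(deriv ^^ (n-1)) (\<lambda>z. lagr_fun 0 t z ^ n) 1 = (deriv ^^ (n-1)) f 1"
    by (rule higher_deriv_transform_within_open[OF holoL holo]) (auto simp: lagr_eq f_def)
  have d2: "(deriv ^^ (n-1)) (\<lambda>w. f (1 * w + 1)) 0 = 1 ^ (n-1) * (deriv ^^ (n-1)) f (1 * 0 + 1)"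
    by (rule higher_deriv_compose_linear'[OF holo, where S="ball 0 (1/2)"]) (auto simp: dist_norm)
  have ex: "(\<lambda>w. f (1 * w + 1)) has_fps_expansion H ^ n"
    unfolding f_def H_def by (intro has_fps_expansion_power hfun_expansion)
  have c: "(H ^ n) $ (n-1) = (deriv ^^ (n-1)) (\<lambda>w. f (1 * w + 1)) 0 / fact (n-1)"
    by (rule fps_nth_fps_expansion[OF ex])
  have a: "a_coef n 0 t = (H ^ n) $ (n-1) / of_nat n"
  proof -
    have "a_coef n 0 t = (H ^ n) $ (n-1) * fact (n-1) / fact n"
      unfolding a_coef_def d1 c using d2 by simp
    also have "fact n = (of_nat n * fact (n-1) :: complex)" using n by (rule fact_reduce)
    finally show ?thesis by simp
  qed
  have "b_coef n 0 t = 4 ^ n * (H ^ n) $ (n-1)"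
    unfolding b_coef_def a using n by (simp add: power_mult)
  also have "\<dots> = 2 * (\<Sum>k=1..n. of_nat ((2 * n) choose (n - k)) *
                 complex_of_real (exp (- (real k * t)) * laguerre (k - 1) 1 (2 * real k * t)))"
    unfolding H_def by (rule part2_formal[OF n])
  finally show ?thesis .
qed





definition phiF :: "real \<Rightarrow> complex fps" where
  "phiF t = fps_const (exp (- complex_of_real t)) * (fps_X + 2) * fps_exp (- complex_of_real t)"

definition gF :: "real \<Rightarrow> complex fps" where
  "gF t = fps_inv (fps_X * inverse (phiF t))"

lemma phiF0: "phiF t $ 0 \<noteq> 0"
  by (simp add: phiF_def)

lemma phiF_pow: "phiF t ^ k = fps_const (exp (- complex_of_real t) ^ k)
   * ((fps_X + 2) ^ k * fps_exp (- (of_nat k * complex_of_real t)))"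
  unfolding phiF_def power_mult_distrib fps_const_power fps_exp_power_mult
  by (simp only: mult_ac mult_minus_right)

lemma phiF_pow_nth: "(phiF t ^ Suc N) $ N =
   2 * complex_of_real (exp (- (real (Suc N) * t)) * laguerre N 1 (2 * real (Suc N) * t))"
proof -
  have e: "exp (- complex_of_real t) ^ Suc N = complex_of_real (exp (- (real (Suc N) * t)))"
  proof -
    have "exp (- complex_of_real t) ^ Suc N = exp (of_nat (Suc N) * (- complex_of_real t))"
      by (rule exp_of_nat_mult[symmetric])
    also have "\<dots> = exp (complex_of_real (- (real (Suc N) * t)))" by simp
    finally show ?thesis by (simp only: exp_of_real)
  qed
  show ?thesis unfolding phiF_pow fps_mult_left_const_nth coefL e by simp
qed

lemma gF_coef: "gF t $ Suc N =
   2 * complex_of_real (exp (- (real (Suc N) * t)) * laguerre N 1 (2 * real (Suc N) * t) / real (Suc N))"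
proof -
  have "of_nat (Suc N) * gF t $ Suc N = (phiF t ^ Suc N) $ N"
    using lagrange_inversion[OF phiF0, of "Suc N" t] by (simp add: gF_def)
  thus ?thesis unfolding phiF_pow_nth
    by (simp add: field_simps del: of_nat_Suc)
qed

lemma gF0: "gF t $ 0 = 0"
  by (simp add: gF_def fps_inv_def)

lemma gF_eq: "gF t = fps_X * (phiF t oo gF t)"
proof -
  define f where "f = fps_X * inverse (phiF t)"
  have f0: "f $ 0 = 0" by (simp add: f_def)
  have f1: "f $ 1 \<noteq> 0" using phiF0[of t] by (simp add: f_def)
  have "f oo gF t = fps_X" unfolding gF_def f_def[symmetric] by (rule fps_inv_right[OF f0 f1])
  moreover have "f oo gF t = gF t * inverse (phiF t oo gF t)"
    unfolding f_def using gF0[of t] phiF0[of t]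
    by (simp add: fps_compose_mult_distrib fps_inverse_compose)
  ultimately have *: "gF t * inverse (phiF t oo gF t) = fps_X" by simp
  have "(phiF t oo gF t) $ 0 \<noteq> 0" using phiF0[of t] by simp
  hence "inverse (phiF t oo gF t) * (phiF t oo gF t) = 1" by (rule inverse_mult_eq_1)
  hence "gF t = gF t * inverse (phiF t oo gF t) * (phiF t oo gF t)" by (simp add: mult.assoc)
  thus ?thesis unfolding * .
qed

lemma phiF_compose: "phiF t oo gF t = fps_const (exp (- complex_of_real t)) * (gF t + 2)
   * (fps_exp (- complex_of_real t) oo gF t)"
  unfolding phiF_def using gF0[of t]
  by (simp add: fps_compose_mult_distrib fps_compose_add_distrib)

lemma pow_fact_le_exp:
  assumes "0 \<le> (x::real)"
  shows "x ^ m / fact m \<le> exp x"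
proof -
  have s: "(\<lambda>n. x ^ n / fact n) sums exp x"
    using exp_converges[of x] by (simp add: divide_inverse mult.commute)
  have "sum (\<lambda>n. x ^ n / fact n) {m} \<le> suminf (\<lambda>n. x ^ n / fact n)"
    by (rule sum_le_suminf) (use s assms in \<open>auto simp: sums_iff\<close>)
  thus ?thesis using s by (simp add: sums_iff)
qed

lemma three_pow: "(\<Sum>i\<le>k. real (k choose i) * 2 ^ (k - i)) = 3 ^ k"
  using binomial_ring[of "1::real" 2 k] by simp

lemma gF_bound:
  assumes t: "t \<ge> 0"
  shows "norm (gF t $ n) \<le> 3 ^ n"
proof (cases n)
  case 0 thus ?thesis by (simp add: gF0)
next
  case (Suc N)
  define k where "k = Suc N"
  define ct where "ct = complex_of_real t"
  have kt: "0 \<le> real k * t" using t by simp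
  have "of_nat k * gF t $ k = (phiF t ^ k) $ N"
    using lagrange_inversion[OF phiF0, of k t] by (simp add: gF_def k_def)
  hence "norm (gF t $ k) * real k = norm ((phiF t ^ k) $ N)"
    by (metis norm_mult norm_of_nat mult.commute)
  hence "norm (gF t $ k) \<le> norm ((phiF t ^ k) $ N)"
  proof -
    have "real k \<ge> 1" by (simp add: k_def)
    hence "norm (gF t $ k) * 1 \<le> norm (gF t $ k) * real k" by (intro mult_left_mono) auto
    thus ?thesis using \<open>norm (gF t $ k) * real k = _\<close> by simp
  qed
  also have "(phiF t ^ k) $ N = exp (- ct) ^ k *
      (\<Sum>i=0..N. of_nat (k choose i) * 2 ^ (k - i) * ((- (of_nat k * ct)) ^ (N - i) / fact (N - i)))"
    unfolding phiF_pow fps_mult_left_const_nth ct_def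
    by (simp only: fps_mult_nth fps_X2_power_nth fps_exp_nth of_nat_fact)
  also have "norm \<dots> \<le> exp (- (real k * t)) *
      (\<Sum>i=0..N. real (k choose i) * 2 ^ (k - i) * ((real k * t) ^ (N - i) / fact (N - i)))"
  proof -
    have n1: "norm (exp (- ct) ^ k) = exp (- (real k * t))"
      unfolding ct_def norm_power by (simp add: exp_of_nat_mult[symmetric])
    have "norm (\<Sum>i=0..N. of_nat (k choose i) * 2 ^ (k - i) * ((- (of_nat k * ct)) ^ (N - i) / fact (N - i)))
        \<le> (\<Sum>i=0..N. norm (of_nat (k choose i) * 2 ^ (k - i) * ((- (of_nat k * ct)) ^ (N - i) / fact (N - i)) :: complex))"
      by (rule norm_sum)
    also have "\<dots> = (\<Sum>i=0..N. real (k choose i) * 2 ^ (k - i) * ((real k * t) ^ (N - i) / fact (N - i)))"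
      by (intro sum.cong refl) (simp add: norm_mult norm_divide norm_power ct_def abs_of_nonneg t)
    finally show ?thesis unfolding norm_mult n1 by (intro mult_left_mono) auto
  qed
  also have "\<dots> \<le> exp (- (real k * t)) * (\<Sum>i=0..N. real (k choose i) * 2 ^ (k - i) * exp (real k * t))"
    by (intro mult_left_mono sum_mono mult_left_mono pow_fact_le_exp kt) auto
  also have "\<dots> = (\<Sum>i=0..N. real (k choose i) * 2 ^ (k - i))"
    by (simp add: sum_distrib_left sum_distrib_right exp_minus field_simps)
  also have "\<dots> \<le> (\<Sum>i\<le>k. real (k choose i) * 2 ^ (k - i))"
    by (rule sum_mono2) (auto simp: k_def)
  also have "\<dots> = 3 ^ k" by (rule three_pow)
  finally show ?thesis by (simp add: k_def Suc)
qed

lemma gF_radius: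
  assumes "t \<ge> 0"
  shows "fps_conv_radius (gF t) > 0"
proof -
  have "summable (\<lambda>n. norm (gF t $ n * (1/4 :: complex) ^ n))"
  proof (rule summable_comparison_test')
    show "summable (\<lambda>n. (3/4 :: real) ^ n)" by (rule summable_geometric) simp
    fix n
    have "norm (gF t $ n * (1/4 :: complex) ^ n) = norm (gF t $ n) * (1/4) ^ n"
      by (simp add: norm_mult norm_power)
    also have "\<dots> \<le> 3 ^ n * (1/4) ^ n"
      by (intro mult_right_mono gF_bound assms) simp
    also have "\<dots> = (3/4) ^ n" by (simp add: power_divide field_simps)
    finally show "norm (norm (gF t $ n * (1/4 :: complex) ^ n)) \<le> (3/4) ^ n" by simp
  qed
  hence "summable (\<lambda>n. gF t $ n * (1/4 :: complex) ^ n)" by (rule summable_norm_cancel)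
  hence "conv_radius (fps_nth (gF t)) \<ge> ereal (norm (1/4 :: complex))" by (rule conv_radius_geI)
  moreover have "(0::ereal) < ereal (norm (1/4 :: complex))" by simp
  ultimately show ?thesis unfolding fps_conv_radius_def by (rule order.strict_trans2[rotated])
qed

lemma alpha_alpha_inv:
  assumes z: "norm z < 1"
  shows "alpha (alpha_inv z) = z"
proof -
  have z1: "1 + z \<noteq> 0"
  proof
    assume "1 + z = 0" hence "z = -1" by (simp add: add_eq_0_iff)
    thus False using z by simp
  qed
  define b where "b = (1 - z) / (1 + z)"
  have sq: "1 - alpha_inv z = b ^ 2"
  proof -
    have d: "(1 + z) ^ 2 \<noteq> 0" using z1 by simp
    have e: "(1 + z) ^ 2 - 4 * z = (1 - z) ^ 2" by (simp add: power2_eq_square algebra_simps)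
    have "((1 + z) ^ 2 - 4 * z) / (1 + z) ^ 2 = 1 - 4 * z / (1 + z) ^ 2"
      using d by (simp add: diff_divide_distrib)
    thus ?thesis unfolding alpha_inv_def b_def power_divide e by simp
  qed
  have "Re ((1 - z) * cnj (1 + z)) = 1 - (norm z)^2"
    using cmod_power2[of z] by (simp add: algebra_simps power2_eq_square)
  hence "Re b > 0" unfolding b_def Re_complex_div_gt_0 using z
    by (simp add: abs_square_less_1)
  hence cs: "csqrt (1 - alpha_inv z) = b" unfolding sq by (intro csqrt_square) simp
  have b1: "1 - b = 2 * z / (1 + z)" "1 + b = 2 / (1 + z)"
    using z1 by (simp_all add: b_def field_simps)
  show ?thesis unfolding alpha_def cs b1 using z1 by simp
qed

lemma part3:
  fixes t :: real
  assumes t: "t > 0"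
  shows "\<exists>r>0. \<forall>z\<in>ball 0 r.
          summable (\<lambda>n. of_real (exp (- (real (Suc n) * t)) * laguerre n 1 (2 * real (Suc n) * t)
                            / real (Suc n)) * z ^ Suc n)
        \<and> Phi 0 t (1 + 2 * (\<Sum>n. of_real (exp (- (real (Suc n) * t)) * laguerre n 1 (2 * real (Suc n) * t)
                            / real (Suc n)) * z ^ Suc n)) = z"
proof -
  define c :: "nat \<Rightarrow> complex" where
    "c n = of_real (exp (- (real (Suc n) * t)) * laguerre n 1 (2 * real (Suc n) * t) / real (Suc n))" for n
  define g where "g = gF t"
  define ct where "ct = complex_of_real t"
  define U where "U = eval_fps g"
  have g0: "g $ 0 = 0" by (simp add: g_def gF0)
  have gS: "g $ Suc n = 2 * c n" for n by (simp add: g_def c_def gF_coef)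
  have R: "fps_conv_radius g > 0" unfolding g_def by (rule gF_radius) (use t in simp)
  have exU: "U has_fps_expansion g" unfolding U_def by (rule eval_fps_has_fps_expansion[OF R])
  have exE: "((\<lambda>x. exp ((- ct) * x)) \<circ> U) has_fps_expansion (fps_exp (- ct) oo g)"
    by (rule has_fps_expansion_compose[OF has_fps_expansion_exp exU g0])
  define K where "K x = U x - x * (exp (- ct) * (U x + 2) * exp ((- ct) * U x))" for x
  have "K has_fps_expansion g - fps_X * (fps_const (exp (- ct)) * (g + 2) * (fps_exp (- ct) oo g))"
    unfolding K_def[abs_def]
    by (intro fps_expansion_intros exU exE[unfolded o_def])
  also have "g - fps_X * (fps_const (exp (- ct)) * (g + 2) * (fps_exp (- ct) oo g)) = 0"
    using gF_eq[of t] phiF_compose[of t] unfolding g_def ct_def by simp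
  finally have ev1: "eventually (\<lambda>x. K x = 0) (nhds 0)" by (simp add: has_fps_expansion_0_iff)
  have ev2: "eventually (\<lambda>x. x \<in> eball 0 (fps_conv_radius g)) (nhds 0)"
    using R by (intro eventually_nhds_in_open) (auto simp: zero_ereal_def)
  have "isCont U 0" unfolding U_def using R by (intro continuous_eval_fps) (simp add: zero_ereal_def)
  moreover have "U 0 = 0" unfolding U_def by (simp add: eval_fps_at_0 g0)
  ultimately have "(U \<longlongrightarrow> 0) (nhds 0)" by (simp add: isCont_def) (metis tendsto_at_iff_tendsto_nhds)
  hence ev3: "eventually (\<lambda>x. norm (U x) < 1/2) (nhds 0)"
  proof -
    have "((\<lambda>x. norm (U x)) \<longlongrightarrow> 0) (nhds 0)" using tendsto_norm[OF \<open>(U \<longlongrightarrow> 0) (nhds 0)\<close>] by simp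
    thus ?thesis by (rule order_tendstoD(2)) simp
  qed
  have ev4: "eventually (\<lambda>x. norm x < (1/2::real)) (nhds (0::complex))"
    unfolding eventually_nhds_metric by (intro exI[of _ "1/2"]) auto
  have "eventually (\<lambda>x. K x = 0 \<and> x \<in> eball 0 (fps_conv_radius g) \<and> norm (U x) < 1/2 \<and> norm x < 1/2) (nhds 0)"
    by (intro eventually_conj ev1 ev2 ev3 ev4)
  then obtain r where r: "r > 0"
    and P: "\<And>x. dist x 0 < r \<Longrightarrow> K x = 0 \<and> x \<in> eball 0 (fps_conv_radius g) \<and> norm (U x) < 1/2 \<and> norm x < 1/2"
    unfolding eventually_nhds_metric by blast
  show ?thesis unfolding c_def[symmetric]
  proof (intro exI[of _ r] conjI ballI r)
    fix z :: complex assume "z \<in> ball 0 r"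
    hence "dist z 0 < r" by (simp add: dist_commute)
    note Pz = P[OF this]
    have sg: "summable (\<lambda>n. g $ n * z ^ n)" by (rule summable_fps) (use Pz in simp)
    have sg': "summable (\<lambda>n. g $ Suc n * z ^ Suc n)" using sg by (subst summable_Suc_iff)
    hence s2: "summable (\<lambda>n. 2 * (c n * z ^ Suc n))" by (simp only: gS mult.assoc)
    hence sc: "summable (\<lambda>n. c n * z ^ Suc n)" by (simp only: summable_cmult_iff) simp
    thus "summable (\<lambda>n. c n * z ^ Suc n)" .
    have "U z = (\<Sum>n. g $ n * z ^ n)" by (simp add: U_def eval_fps_def)
    also have "\<dots> = (\<Sum>n. g $ Suc n * z ^ Suc n)" using suminf_split_head[OF sg] g0 by simp
    also have "\<dots> = (\<Sum>n. 2 * (c n * z ^ Suc n))" by (simp only: gS mult.assoc)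
    also have "\<dots> = 2 * (\<Sum>n. c n * z ^ Suc n)" by (rule suminf_mult[OF sc])
    finally have Uz: "U z = 2 * (\<Sum>n. c n * z ^ Suc n)" .
    define u where "u = U z"
    have u2: "u + 2 \<noteq> 0" and u0: "1 + u \<noteq> 0"
    proof -
      have "norm u < 1/2" using Pz by (simp add: u_def)
      show "u + 2 \<noteq> 0"
      proof
        assume "u + 2 = 0" hence "u = - 2" by (simp add: eq_neg_iff_add_eq_0)
        thus False using \<open>norm u < 1/2\<close> by simp
      qed
      show "1 + u \<noteq> 0"
      proof
        assume "1 + u = 0" hence "u = - 1" by (simp add: eq_neg_iff_add_eq_0 add.commute)
        thus False using \<open>norm u < 1/2\<close> by simp
      qed
    qed
    have Kz: "u = z * (exp (- ct) * (u + 2) * exp ((- ct) * u))"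
      using Pz by (simp add: K_def u_def)
    have xi: "xi2t t (1 + u) = z"
    proof -
      have "xi2t t (1 + u) = u / (u + 2) * (exp ct * exp (ct * u))"
        unfolding xi2t_def ct_def[symmetric] by (simp add: exp_add[symmetric] algebra_simps)
      also have "\<dots> = z * (exp (- ct) * exp ct) * (exp ((- ct) * u) * exp (ct * u))"
        using u2 by (subst (1) Kz) (simp add: field_simps)
      also have "\<dots> = z" by (simp add: exp_add[symmetric])
      finally show ?thesis .
    qed
    have ph: "phi 0 t (1 + u) = alpha_inv z"
      using u0 by (simp add: phi_def xi)
    show "Phi 0 t (1 + 2 * (\<Sum>n. c n * z ^ Suc n)) = z"
      unfolding Uz[symmetric] u_def[symmetric] Phi_def o_def ph
      by (rule alpha_alpha_inv) (use Pz in simp)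
  qed
qed


theorem mainTheorem3:
  fixes t :: real
  assumes "t > 0"
  shows "(\<forall>n m. Ppoly n m 0 = (if m = 0 then 1 else 0))
    \<and> (\<forall>n\<ge>1. b_coef n 0 t =
          2 * (\<Sum>k=1..n. of_nat ((2 * n) choose (n - k)) *
                 of_real (exp (- (real k * t)) * laguerre (k - 1) 1 (2 * real k * t))))
    \<and> (\<exists>r>0. \<forall>z\<in>ball 0 r.
          summable (\<lambda>n. of_real (exp (- (real (Suc n) * t)) * laguerre n 1 (2 * real (Suc n) * t)
                            / real (Suc n)) * z ^ Suc n)
        \<and> Phi 0 t (1 + 2 * (\<Sum>n. of_real (exp (- (real (Suc n) * t)) * laguerre n 1 (2 * real (Suc n) * t)
                            / real (Suc n)) * z ^ Suc n)) = z)"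
proof (intro conjI allI impI)
  fix n m
  show "Ppoly n m 0 = (if m = 0 then 1 else 0)"
  proof -
    have "(\<Sum>k=0..n. of_nat (n choose k) * (- (0::complex)) ^ k * pochhammer (of_nat (2 * k)) m)
        = (\<Sum>k=0..n. if k = 0 then pochhammer (of_nat (2 * k)) m else 0)"
      by (intro sum.cong refl) simp
    also have "\<dots> = pochhammer 0 m" by (subst sum.delta) auto
    finally show ?thesis by (simp add: Ppoly_def pochhammer_0_left)
  qed
next
  fix n :: nat assume "n \<ge> 1"
  thus "b_coef n 0 t = 2 * (\<Sum>k=1..n. of_nat ((2 * n) choose (n - k)) *
                 of_real (exp (- (real k * t)) * laguerre (k - 1) 1 (2 * real k * t)))"
    by (rule part2)
next
  show "\<exists>r>0. \<forall>z\<in>ball 0 r.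
          summable (\<lambda>n. of_real (exp (- (real (Suc n) * t)) * laguerre n 1 (2 * real (Suc n) * t)
                            / real (Suc n)) * z ^ Suc n)
        \<and> Phi 0 t (1 + 2 * (\<Sum>n. of_real (exp (- (real (Suc n) * t)) * laguerre n 1 (2 * real (Suc n) * t)
                            / real (Suc n)) * z ^ Suc n)) = z"
    by (rule part3[OF assms])
qed

end
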